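(* Let $K=K_1\times\cdots\times K_n$ be a product of CM fields, let $\alpha=(\alpha_1,\dots,\alpha_n)\in K$, and let $g_i\in\mathbb{Z}[x]$ be the minimal polynomial of $\alpha_i+\overline{\alpha}_i$. Then $\alpha$ is a Weil generator for $K$ if and only if (i) each $\alpha_i$ is a Weil generator for $K_i$, (ii) $\alpha_1\overline{\alpha}_1=\cdots=\alpha_n\overline{\alpha}_n$, and (iii) $|\operatorname{Res}(g_i,g_j)|=1$ for all $i\neq j$.
   Context: For a product of CM fields $K=K_1\times\cdots\times K_n$ (with componentwise CM involution $\overline{\cdot}$), an element $\alpha\in K$ is a Weil generator for $K$ if $\alpha\overline{\alpha}$ lies in the image of the diagonal embedding $\mathbb{Z}\to K$ and $\mathbb{Z}[\alpha,\overline{\alpha}]=\mathcal{O}_K:=\prod_i\mathcal{O}_{K_i}$. $\operatorname{Res}$ denotes the resultant. *)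

theory Defs
  imports Complex_Main "HOL-Computational_Algebra.Polynomial_Factorial" "Subresultants.Resultant_Prelim"
begin

text \<open>Number fields are modelled as subfields of the complex numbers that are
  finite-dimensional over the rationals.\<close>

definition subfield_C :: "complex set \<Rightarrow> bool" where
  "subfield_C K \<longleftrightarrow> 0 \<in> K \<and> 1 \<in> K \<and>
     (\<forall>x\<in>K. \<forall>y\<in>K. x + y \<in> K \<and> x * y \<in> K) \<and>
     (\<forall>x\<in>K. - x \<in> K \<and> inverse x \<in> K)"

definition number_field :: "complex set \<Rightarrow> bool" where
  "number_field K \<longleftrightarrow> subfield_C K \<and>
     (\<exists>B. finite B \<and> B \<subseteq> K \<and> (\<forall>x\<in>K. \<exists>c. x = (\<Sum>b\<in>B. of_rat (c b) * b)))"

definition field_embedding :: "complex set \<Rightarrow> (complex \<Rightarrow> complex) \<Rightarrow> bool" where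
  "field_embedding K \<sigma> \<longleftrightarrow> \<sigma> 1 = 1 \<and>
     (\<forall>x\<in>K. \<forall>y\<in>K. \<sigma> (x + y) = \<sigma> x + \<sigma> y \<and> \<sigma> (x * y) = \<sigma> x * \<sigma> y)"

text \<open>For a CM field inside the complex numbers the CM involution
  is necessarily the restriction of complex conjugation.\<close>
definition CM_field :: "complex set \<Rightarrow> bool" where
  "CM_field K \<longleftrightarrow> number_field K \<and> (\<forall>x\<in>K. cnj x \<in> K) \<and> (\<exists>x\<in>K. x \<notin> \<real>) \<and>
     (\<forall>\<sigma>. field_embedding K \<sigma> \<longrightarrow> (\<forall>x\<in>K. \<sigma> (cnj x) = cnj (\<sigma> x)))"

definition alg_integer :: "complex \<Rightarrow> bool" where
  "alg_integer x \<longleftrightarrow> (\<exists>p :: int poly. lead_coeff p = 1 \<and> poly (map_poly of_int p) x = 0)"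

definition ring_of_integers :: "complex set \<Rightarrow> complex set" where
  "ring_of_integers K = {x \<in> K. alg_integer x}"

definition int_alg2 :: "complex \<Rightarrow> complex \<Rightarrow> complex set" where
  "int_alg2 a b = {y. \<exists>N (c :: nat \<Rightarrow> nat \<Rightarrow> int).
      y = (\<Sum>i<N. \<Sum>j<N. of_int (c i j) * a ^ i * b ^ j)}"

definition weil_generator :: "complex set \<Rightarrow> complex \<Rightarrow> bool" where
  "weil_generator K a \<longleftrightarrow> a \<in> K \<and> a * cnj a \<in> \<int> \<and> int_alg2 a (cnj a) = ring_of_integers K"

text \<open>Product K_0 x ... x K_(n-1): elements are functions nat => complex with value 0
  outside {0..<n}; operations and conjugation are componentwise.\<close>
definition prod_ring_of_integers :: "nat \<Rightarrow> (nat \<Rightarrow> complex set) \<Rightarrow> (nat \<Rightarrow> complex) set" where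
  "prod_ring_of_integers n K =
     {x. (\<forall>k<n. x k \<in> ring_of_integers (K k)) \<and> (\<forall>k\<ge>n. x k = 0)}"

definition prod_int_alg2 :: "nat \<Rightarrow> (nat \<Rightarrow> complex) \<Rightarrow> (nat \<Rightarrow> complex) set" where
  "prod_int_alg2 n \<alpha> = {x. \<exists>N (c :: nat \<Rightarrow> nat \<Rightarrow> int). x = (\<lambda>k. if k < n then
      (\<Sum>i<N. \<Sum>j<N. of_int (c i j) * \<alpha> k ^ i * cnj (\<alpha> k) ^ j) else 0)}"

definition weil_generator_prod :: "nat \<Rightarrow> (nat \<Rightarrow> complex set) \<Rightarrow> (nat \<Rightarrow> complex) \<Rightarrow> bool" where
  "weil_generator_prod n K \<alpha> \<longleftrightarrow> (\<forall>k<n. \<alpha> k \<in> K k) \<and>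
     (\<exists>q :: int. \<forall>k<n. \<alpha> k * cnj (\<alpha> k) = of_int q) \<and>
     prod_int_alg2 n \<alpha> = prod_ring_of_integers n K"

definition is_min_int_poly :: "int poly \<Rightarrow> complex \<Rightarrow> bool" where
  "is_min_int_poly p x \<longleftrightarrow> irreducible p \<and> lead_coeff p > 0 \<and> poly (map_poly of_int p) x = 0"

end

theory Submission
  imports Defs Subresultants.Subresultant_Gcd
begin

definition ev :: "int poly \<Rightarrow> complex \<Rightarrow> complex" where
  "ev p z = poly (map_poly of_int p) z"

lemma ev_add[simp]: "ev (p + q) z = ev p z + ev q z"
  by (simp add: ev_def of_int_hom.map_poly_hom_add)
lemma ev_mult[simp]: "ev (p * q) z = ev p z * ev q z"
  by (simp add: ev_def of_int_poly_hom.hom_mult)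
lemma ev_uminus[simp]: "ev (- p) z = - ev p z"
  by (simp add: ev_def of_int_poly_hom.hom_uminus)
lemma ev_diff[simp]: "ev (p - q) z = ev p z - ev q z"
  by (simp add: ev_def of_int_poly_hom.hom_minus)
lemma ev_pCons[simp]: "ev (pCons a p) z = of_int a + z * ev p z"
  by (simp add: ev_def of_int_hom.map_poly_pCons_hom)
lemma ev_const[simp]: "ev [:c:] z = of_int c"
  by (simp add: ev_def of_int_hom.map_poly_pCons_hom)
lemma ev_0[simp]: "ev 0 z = 0" by (simp add: ev_def of_int_hom.map_poly_pCons_hom)
lemma ev_1[simp]: "ev 1 z = 1" by (simp add: ev_def of_int_hom.map_poly_pCons_hom)
lemma ev_x: "ev [:0,1:] z = z" by (simp add: ev_def of_int_hom.map_poly_pCons_hom)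
lemma ev_smult[simp]: "ev (smult c p) z = of_int c * ev p z"
  by (simp add: ev_def of_int_hom.map_poly_hom_smult)
lemma ev_prod: "ev (\<Prod>i\<in>A. f i) z = (\<Prod>i\<in>A. ev (f i) z)"
  by (induction A rule: infinite_finite_induct) auto
lemma ev_sum: "ev (\<Sum>i\<in>A. f i) z = (\<Sum>i\<in>A. ev (f i) z)"
  by (induction A rule: infinite_finite_induct) auto

lemma cnj_ev: "cnj (ev p z) = ev p (cnj z)"
  by (induction p) auto

lemma ev_real: "z \<in> \<real> \<Longrightarrow> ev p z \<in> \<real>"
  by (induction p) auto

definition rep :: "nat \<Rightarrow> (nat \<Rightarrow> complex) \<Rightarrow> (nat \<Rightarrow> complex) \<Rightarrow> bool" where
  "rep n a f \<longleftrightarrow> (\<exists>N (c::nat\<Rightarrow>nat\<Rightarrow>int). \<forall>k<n.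
      f k = (\<Sum>i<N. \<Sum>j<N. of_int (c i j) * a k ^ i * cnj (a k) ^ j))"

lemma rep_gen:
  fixes X :: "'x set" and d :: "'x \<Rightarrow> int"
  assumes fin: "finite X"
  shows "rep n a (\<lambda>k. \<Sum>x\<in>X. of_int (d x) * a k ^ s x * cnj (a k) ^ t x)"
proof -
  define g where "g = (\<lambda>x. (s x, t x))"
  define F where "F = g ` X"
  define N where "N = Suc (Max (insert 0 (fst ` F \<union> snd ` F)))"
  define c where "c = (\<lambda>i j. \<Sum>x\<in>{x\<in>X. g x = (i,j)}. d x)"
  have finF: "finite F" using fin unfolding F_def by auto
  have FN: "F \<subseteq> {..<N} \<times> {..<N}"
  proof
    fix y assume y: "y \<in> F"
    have "fst y \<le> Max (insert 0 (fst ` F \<union> snd ` F))"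
      using finF y by (intro Max_ge) auto
    moreover have "snd y \<le> Max (insert 0 (fst ` F \<union> snd ` F))"
      using finF y by (intro Max_ge) auto
    ultimately show "y \<in> {..<N} \<times> {..<N}" unfolding N_def by (cases y) auto
  qed
  show ?thesis unfolding rep_def
  proof (intro exI[of _ N] exI[of _ c] allI impI)
    fix k :: nat
    let ?h = "\<lambda>x. of_int (d x) * a k ^ s x * cnj (a k) ^ t x"
    let ?H = "\<lambda>y. (of_int (c (fst y) (snd y)) :: complex) * a k ^ fst y * cnj (a k) ^ snd y"
    have "(\<Sum>x\<in>X. ?h x) = (\<Sum>y\<in>F. \<Sum>x\<in>{x\<in>X. g x = y}. ?h x)"
      unfolding F_def by (rule sum.image_gen[OF fin])
    also have "\<dots> = (\<Sum>y\<in>F. ?H y)"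
    proof (rule sum.cong[OF refl])
      fix y assume "y \<in> F"
      have "(\<Sum>x\<in>{x\<in>X. g x = y}. ?h x) = (\<Sum>x\<in>{x\<in>X. g x = y}. of_int (d x) * (a k ^ fst y * cnj (a k) ^ snd y))"
        by (rule sum.cong) (auto simp: g_def)
      also have "\<dots> = of_int (\<Sum>x\<in>{x\<in>X. g x = y}. d x) * (a k ^ fst y * cnj (a k) ^ snd y)"
        by (simp add: sum_distrib_right)
      finally show "(\<Sum>x\<in>{x\<in>X. g x = y}. ?h x) = ?H y"
        by (cases y) (simp add: c_def mult.assoc)
    qed
    also have "\<dots> = (\<Sum>y\<in>{..<N} \<times> {..<N}. ?H y)"
    proof (rule sum.mono_neutral_left[OF _ FN])
      show "\<forall>y\<in>{..<N} \<times> {..<N} - F. ?H y = 0"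
      proof
        fix y assume "y \<in> {..<N} \<times> {..<N} - F"
        hence "\<forall>x\<in>X. g x \<noteq> y" unfolding F_def by blast
        hence e: "{x\<in>X. g x = y} = {}" by auto
        have "c (fst y) (snd y) = 0" unfolding c_def prod.collapse e by simp
        thus "?H y = 0" by simp
      qed
    qed auto
    also have "\<dots> = (\<Sum>i<N. \<Sum>j<N. of_int (c i j) * a k ^ i * cnj (a k) ^ j)"
      by (simp add: sum.cartesian_product case_prod_beta)
    finally show "(\<Sum>x\<in>X. ?h x) = (\<Sum>i<N. \<Sum>j<N. of_int (c i j) * a k ^ i * cnj (a k) ^ j)" .
  qed
qed

lemma rep_D:
  assumes "rep n a f"
  obtains N c where "\<And>k. k < n \<Longrightarrow> f k =
     (\<Sum>p\<in>{..<N}\<times>{..<N}. of_int (c p) * a k ^ fst p * cnj (a k) ^ snd p)"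
proof -
  from assms obtain N c where h: "\<forall>k<n. f k = (\<Sum>i<N. \<Sum>j<N. of_int (c i j) * a k ^ i * cnj (a k) ^ j)"
    unfolding rep_def by blast
  show ?thesis
    by (rule that[where N=N and c="\<lambda>p. c (fst p) (snd p)"]) (simp add: h sum.cartesian_product case_prod_beta)
qed

lemma rep_cong: assumes "rep n a f" "\<And>k. k < n \<Longrightarrow> f k = g k" shows "rep n a g"
proof -
  from assms(1) obtain N c where h: "\<forall>k<n. f k = (\<Sum>i<N. \<Sum>j<N. of_int (c i j) * a k ^ i * cnj (a k) ^ j)"
    unfolding rep_def by blast
  show ?thesis unfolding rep_def using h assms(2) by (intro exI[of _ N] exI[of _ c]) auto
qed

lemma rep_add:
  assumes "rep n a f" "rep n a g" shows "rep n a (\<lambda>k. f k + g k)"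
proof -
  obtain N c where f: "\<And>k. k < n \<Longrightarrow> f k =
     (\<Sum>p\<in>{..<N}\<times>{..<N}. of_int (c p) * a k ^ fst p * cnj (a k) ^ snd p)"
    using rep_D[OF assms(1)] by blast
  obtain M e where g: "\<And>k. k < n \<Longrightarrow> g k =
     (\<Sum>p\<in>{..<M}\<times>{..<M}. of_int (e p) * a k ^ fst p * cnj (a k) ^ snd p)"
    using rep_D[OF assms(2)] by blast
  let ?X = "({..<N}\<times>{..<N}) <+> ({..<M}\<times>{..<M})"
  have "rep n a (\<lambda>k. \<Sum>x\<in>?X. of_int (case_sum c e x) * a k ^ case_sum fst fst x * cnj (a k) ^ case_sum snd snd x)"
    by (rule rep_gen) auto
  thus ?thesis
    by (rule rep_cong) (simp add: sum.Plus f g)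
qed

lemma rep_mult:
  assumes "rep n a f" "rep n a g" shows "rep n a (\<lambda>k. f k * g k)"
proof -
  obtain N c where f: "\<And>k. k < n \<Longrightarrow> f k =
     (\<Sum>p\<in>{..<N}\<times>{..<N}. of_int (c p) * a k ^ fst p * cnj (a k) ^ snd p)"
    using rep_D[OF assms(1)] by blast
  obtain M e where g: "\<And>k. k < n \<Longrightarrow> g k =
     (\<Sum>p\<in>{..<M}\<times>{..<M}. of_int (e p) * a k ^ fst p * cnj (a k) ^ snd p)"
    using rep_D[OF assms(2)] by blast
  let ?X = "({..<N}\<times>{..<N}) \<times> ({..<M}\<times>{..<M})"
  have "rep n a (\<lambda>k. \<Sum>x\<in>?X. of_int (c (fst x) * e (snd x)) * a k ^ (fst (fst x) + fst (snd x))
          * cnj (a k) ^ (snd (fst x) + snd (snd x)))"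
    by (rule rep_gen) auto
  thus ?thesis
  proof (rule rep_cong)
    fix k assume k: "k < n"
    let ?F = "\<lambda>p. (of_int (c p) :: complex) * a k ^ fst p * cnj (a k) ^ snd p"
    let ?G = "\<lambda>p. (of_int (e p) :: complex) * a k ^ fst p * cnj (a k) ^ snd p"
    have "f k * g k = (\<Sum>p\<in>{..<N}\<times>{..<N}. \<Sum>p'\<in>{..<M}\<times>{..<M}. ?F p * ?G p')"
      unfolding f[OF k] g[OF k] by (rule sum_product)
    also have "\<dots> = (\<Sum>x\<in>?X. ?F (fst x) * ?G (snd x))"
      by (simp add: sum.cartesian_product case_prod_beta)
    also have "\<dots> = (\<Sum>x\<in>?X. of_int (c (fst x) * e (snd x)) * a k ^ (fst (fst x) + fst (snd x))
          * cnj (a k) ^ (snd (fst x) + snd (snd x)))"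
      by (rule sum.cong[OF refl]) (simp add: power_add mult_ac)
    finally show "(\<Sum>x\<in>?X. of_int (c (fst x) * e (snd x)) * a k ^ (fst (fst x) + fst (snd x))
          * cnj (a k) ^ (snd (fst x) + snd (snd x))) = f k * g k" by simp
  qed
qed

lemma rep_const: "rep n a (\<lambda>k. of_int m)"
proof -
  have "rep n a (\<lambda>k. \<Sum>x\<in>{()}. of_int m * a k ^ 0 * cnj (a k) ^ 0)"
    by (rule rep_gen) auto
  thus ?thesis by (rule rep_cong) simp
qed

lemma rep_a: "rep n a a"
proof -
  have "rep n a (\<lambda>k. \<Sum>x\<in>{()}. of_int 1 * a k ^ 1 * cnj (a k) ^ 0)"
    by (rule rep_gen) auto
  thus ?thesis by (rule rep_cong) simp
qed

lemma rep_cnj: "rep n a (\<lambda>k. cnj (a k))"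
proof -
  have "rep n a (\<lambda>k. \<Sum>x\<in>{()}. of_int 1 * a k ^ 0 * cnj (a k) ^ 1)"
    by (rule rep_gen) auto
  thus ?thesis by (rule rep_cong) simp
qed

lemma rep_ev: "rep n a (\<lambda>k. ev P (a k + cnj (a k)))"
proof (induction P)
  case 0
  then show ?case using rep_const[of n a 0] by simp
next
  case (pCons c p)
  have "rep n a (\<lambda>k. of_int c + (a k + cnj (a k)) * ev p (a k + cnj (a k)))"
    by (intro rep_add rep_mult rep_const rep_a rep_cnj pCons)
  then show ?case by simp
qed

definition srep :: "nat \<Rightarrow> (nat \<Rightarrow> complex) \<Rightarrow> (nat \<Rightarrow> complex) \<Rightarrow> bool" where
  "srep n a f \<longleftrightarrow> (\<exists>P Q. \<forall>k<n. f k = ev P (a k + cnj (a k)) + ev Q (a k + cnj (a k)) * a k)"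

lemma srep_rep: "srep n a f \<Longrightarrow> rep n a f"
  unfolding srep_def
  by (elim exE, rule rep_cong[OF rep_add[OF rep_ev rep_mult[OF rep_ev rep_a]]]) auto

lemma srep_add: "srep n a f \<Longrightarrow> srep n a g \<Longrightarrow> srep n a (\<lambda>k. f k + g k)"
  unfolding srep_def
proof (elim exE)
  fix P Q P' Q' assume "\<forall>k<n. f k = ev P (a k + cnj (a k)) + ev Q (a k + cnj (a k)) * a k"
    "\<forall>k<n. g k = ev P' (a k + cnj (a k)) + ev Q' (a k + cnj (a k)) * a k"
  thus "\<exists>P Q. \<forall>k<n. f k + g k = ev P (a k + cnj (a k)) + ev Q (a k + cnj (a k)) * a k"
    by (intro exI[of _ "P + P'"] exI[of _ "Q + Q'"]) (auto simp: algebra_simps)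
qed

lemma srep_mult:
  assumes q: "\<forall>k<n. a k * cnj (a k) = of_int q"
  shows "srep n a f \<Longrightarrow> srep n a g \<Longrightarrow> srep n a (\<lambda>k. f k * g k)"
  unfolding srep_def
proof (elim exE)
  fix P Q P' Q' assume f: "\<forall>k<n. f k = ev P (a k + cnj (a k)) + ev Q (a k + cnj (a k)) * a k"
    and g: "\<forall>k<n. g k = ev P' (a k + cnj (a k)) + ev Q' (a k + cnj (a k)) * a k"
  show "\<exists>P Q. \<forall>k<n. f k * g k = ev P (a k + cnj (a k)) + ev Q (a k + cnj (a k)) * a k"
  proof (rule exI[of _ "P * P' - [:q:] * Q * Q'"], rule exI[of _ "P * Q' + Q * P' + [:0,1:] * Q * Q'"], intro allI impI)
    fix k assume k: "k < n"
    have qk: "of_int q = a k * cnj (a k)" using q k by auto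
    show "f k * g k = ev (P * P' - [:q:] * Q * Q') (a k + cnj (a k)) +
       ev (P * Q' + Q * P' + [:0,1:] * Q * Q') (a k + cnj (a k)) * a k"
      unfolding f[rule_format, OF k] g[rule_format, OF k] by (simp add: ev_x qk algebra_simps)
  qed
qed

lemma srep_const: "srep n a (\<lambda>k. of_int m)"
  unfolding srep_def by (intro exI[of _ "[:m:]"] exI[of _ 0]) auto

lemma srep_a: "srep n a a"
  unfolding srep_def by (intro exI[of _ 0] exI[of _ 1]) auto

lemma srep_cnj: "srep n a (\<lambda>k. cnj (a k))"
  unfolding srep_def by (intro exI[of _ "[:0,1:]"] exI[of _ "-1"]) (auto simp: ev_x)

lemma srep_cong: assumes "srep n a f" "\<And>k. k < n \<Longrightarrow> f k = g k" shows "srep n a g"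
proof -
  from assms(1) obtain P Q where h: "\<forall>k<n. f k = ev P (a k + cnj (a k)) + ev Q (a k + cnj (a k)) * a k"
    unfolding srep_def by blast
  show ?thesis unfolding srep_def using h assms(2) by (intro exI[of _ P] exI[of _ Q]) auto
qed

lemma srep_sum:
  assumes "finite X" "\<And>x. x \<in> X \<Longrightarrow> srep n a (F x)"
  shows "srep n a (\<lambda>k. \<Sum>x\<in>X. F x k)"
  using assms
proof (induction X rule: finite_induct)
  case empty
  then show ?case using srep_const[of n a 0] by simp
next
  case (insert x X)
  have "srep n a (\<lambda>k. F x k + (\<Sum>x\<in>X. F x k))"
    by (rule srep_add) (use insert in auto)
  then show ?case using insert by simp
qed

lemma srep_pow:
  assumes q: "\<forall>k<n. a k * cnj (a k) = of_int q" and "srep n a f"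
  shows "srep n a (\<lambda>k. f k ^ m)"
proof (induction m)
  case 0
  then show ?case using srep_const[of n a 1] by simp
next
  case (Suc m)
  have "srep n a (\<lambda>k. f k * f k ^ m)" by (rule srep_mult[OF q assms(2) Suc])
  then show ?case by simp
qed

lemma rep_srep:
  assumes q: "\<forall>k<n. a k * cnj (a k) = of_int q" and r: "rep n a f"
  shows "srep n a f"
proof -
  from r obtain N c where h: "\<forall>k<n. f k = (\<Sum>i<N. \<Sum>j<N. of_int (c i j) * a k ^ i * cnj (a k) ^ j)"
    unfolding rep_def by blast
  have "srep n a (\<lambda>k. \<Sum>i<N. \<Sum>j<N. of_int (c i j) * a k ^ i * cnj (a k) ^ j)"
    by (intro srep_sum srep_mult[OF q] srep_const srep_pow[OF q] srep_a srep_cnj) auto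
  thus ?thesis by (rule srep_cong) (simp add: h)
qed

definition rowp :: "int poly \<Rightarrow> int poly \<Rightarrow> nat \<Rightarrow> int poly" where
  "rowp f g i = (if i < degree g then monom 1 (degree g - i) * f
                 else monom 1 (degree f + degree g - i) * g)"

lemma x_mult: "[:0,1:] * (p :: int poly) = pCons 0 p"
  by (simp add: pCons_eq_iff)

lemma monom_Suc_x: "monom (c::int) (Suc k) = [:0,1:] * monom c k"
  by (simp add: monom_Suc x_mult)

lemma syl_entry:
  assumes "i < degree f + degree g" "j < degree f + degree g"
  shows "sylvester_mat f g $$ (i,j) = coeff (rowp f g i) (degree f + degree g - j)"
  using sylvester_index_mat2[OF assms] unfolding rowp_def by simp

lemma deg_rowp:
  assumes "i < degree f + degree g"
  shows "degree (rowp f g i) \<le> degree f + degree g"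
proof (cases "i < degree g")
  case True
  have "degree (monom (1::int) (degree g - i) * f) \<le> degree (monom (1::int) (degree g - i)) + degree f"
    by (rule degree_mult_le)
  also have "\<dots> \<le> degree f + degree g" using True by (simp add: degree_monom_eq)
  finally show ?thesis using True unfolding rowp_def by simp
next
  case False
  have "degree (monom (1::int) (degree f + degree g - i) * g) \<le> degree (monom (1::int) (degree f + degree g - i)) + degree g"
    by (rule degree_mult_le)
  also have "\<dots> \<le> degree f + degree g" using False by (simp add: degree_monom_eq)
  finally show ?thesis using False unfolding rowp_def by simp
qed

lemma ideal_sum:
  fixes f g :: "int poly"
  assumes "finite A" "\<And>i. i \<in> A \<Longrightarrow> \<exists>u v. F i = u * f + v * g"
  shows "\<exists>u v. (\<Sum>i\<in>A. F i) = u * f + v * g"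
  using assms
proof (induction A rule: finite_induct)
  case empty
  then show ?case by (intro exI[of _ 0]) auto
next
  case (insert x A)
  then obtain u v where uv: "(\<Sum>i\<in>A. F i) = u * f + v * g" by auto
  have "\<exists>u v. F x = u * f + v * g" using insert.prems by auto
  then obtain u' v' where uv': "F x = u' * f + v' * g" by blast
  show ?case using insert uv uv'
    by (intro exI[of _ "u + u'"] exI[of _ "v + v'"]) (simp add: algebra_simps)
qed

lemma rowp_x:
  assumes "i < degree f + degree g"
  shows "\<exists>w. rowp f g i = [:0,1:] * w \<and> (\<exists>u v. w = u * f + v * g)"
proof (cases "i < degree g")
  case True
  then obtain k where k: "degree g - i = Suc k" by (cases "degree g - i") auto
  have "rowp f g i = [:0,1:] * (monom 1 k * f)" by (simp add: rowp_def True k monom_Suc_x)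
  moreover have "monom 1 k * f = monom 1 k * f + 0 * g" by simp
  ultimately show ?thesis by blast
next
  case False
  then obtain k where k: "degree f + degree g - i = Suc k" using assms
    by (cases "degree f + degree g - i") auto
  have "rowp f g i = [:0,1:] * (monom 1 k * g)" by (simp add: rowp_def False k monom_Suc_x)
  moreover have "monom 1 k * g = 0 * f + monom 1 k * g" by simp
  ultimately show ?thesis by blast
qed

lemma coeff_rowp_0:
  assumes "i < degree f + degree g" shows "coeff (rowp f g i) 0 = 0"
  using rowp_x[OF assms] by (auto simp: x_mult)

lemma row_comb:
  fixes f g :: "int poly"
  defines "D \<equiv> degree f + degree g"
  assumes j: "j < D"
  shows "(\<Sum>i<D. r i * sylvester_mat f g $$ (i,j)) = coeff (\<Sum>i<D. smult (r i) (rowp f g i)) (D - j)"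
  unfolding coeff_sum coeff_smult using syl_entry[of _ f g j] j unfolding D_def
  by (intro sum.cong) auto

lemma resultant_bezout:
  fixes f g :: "int poly"
  assumes D0: "degree f + degree g > 0"
  shows "\<exists>u v. u * f + v * g = [:resultant f g:]"
proof -
  define D where "D = degree f + degree g"
  define S where "S = sylvester_mat f g"
  have SC: "S \<in> carrier_mat D D" unfolding S_def D_def by (rule sylvester_carrier_mat)
  define A where "A = adj_mat S"
  have AC: "A \<in> carrier_mat D D" using adj_mat(1)[OF SC] unfolding A_def .
  have AS: "A * S = det S \<cdot>\<^sub>m 1\<^sub>m D" using adj_mat(3)[OF SC] unfolding A_def .
  define r where "r i = A $$ (D - 1, i)" for i
  have D1: "D - 1 < D" using D0 unfolding D_def by simp
  have rs: "(\<Sum>i<D. r i * S $$ (i,j)) = (if j = D - 1 then det S else 0)" if j: "j < D" for j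
  proof -
    have "(A * S) $$ (D - 1, j) = (\<Sum>i<D. r i * S $$ (i,j))"
      using AC SC D1 j unfolding r_def
      by (simp add: scalar_prod_def lessThan_atLeast0)
    also have "(A * S) $$ (D - 1, j) = (if j = D - 1 then det S else 0)"
      unfolding AS using D1 j by simp
    finally show ?thesis by simp
  qed
  define H where "H = (\<Sum>i<D. smult (r i) (rowp f g i))"
  have H: "H = monom (det S) 1"
  proof (rule poly_eqI)
    fix t
    show "coeff H t = coeff (monom (det S) 1) t"
    proof (cases "t = 0")
      case True
      then show ?thesis unfolding H_def coeff_sum coeff_smult
        using coeff_rowp_0[of _ f g] by (simp add: D_def)
    next
      case False
      show ?thesis
      proof (cases "t > D")
        case True
        have "coeff (rowp f g i) t = 0" if "i < D" for i
          using deg_rowp[of i f g] that True unfolding D_def by (intro coeff_eq_0) auto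
        then show ?thesis using True False D0 unfolding H_def coeff_sum coeff_smult
          by (auto simp: coeff_monom D_def)
      next
        case tD: False
        define j where "j = D - t"
        have j: "j < D" and t: "t = D - j" using False tD unfolding j_def by auto
        have "coeff H t = (\<Sum>i<D. r i * S $$ (i,j))"
          unfolding H_def t S_def using row_comb[of j f g r] j unfolding D_def by simp
        also have "\<dots> = (if j = D - 1 then det S else 0)" by (rule rs[OF j])
        also have "\<dots> = coeff (monom (det S) 1) t" using t j D1 by (auto simp: coeff_monom)
        finally show ?thesis .
      qed
    qed
  qed
  have "\<forall>i. \<exists>w. i < D \<longrightarrow> rowp f g i = [:0,1:] * w \<and> (\<exists>u v. w = u * f + v * g)"
    using rowp_x[of _ f g] unfolding D_def by blast
  then obtain w where w: "\<And>i. i < D \<Longrightarrow> rowp f g i = [:0,1:] * w i \<and> (\<exists>u v. w i = u * f + v * g)"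
    by metis
  define W where "W = (\<Sum>i<D. smult (r i) (w i))"
  have HW: "H = [:0,1:] * W" unfolding H_def W_def
    by (simp add: sum_distrib_left w mult_smult_right)
  have "\<exists>u v. W = u * f + v * g" unfolding W_def
  proof (rule ideal_sum)
    fix i assume "i \<in> {..<D}"
    hence "\<exists>u v. w i = u * f + v * g" using w by blast
    then obtain u v where "w i = u * f + v * g" by blast
    thus "\<exists>u v. smult (r i) (w i) = u * f + v * g"
      by (intro exI[of _ "smult (r i) u"] exI[of _ "smult (r i) v"]) (simp add: smult_add_right)
  qed auto
  moreover have "W = [:det S:]"
  proof -
    have "[:0,1:] * W = [:0,1:] * [:det S:]" using H HW by (simp add: monom_Suc_x[of _ 0, simplified] monom_0)
    thus ?thesis by simp
  qed
  ultimately show ?thesis unfolding resultant_def S_def by metis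
qed

lemma poly_lt_sum:
  fixes u :: "int poly"
  assumes "\<And>i. i \<ge> n \<Longrightarrow> coeff u i = 0"
  shows "u = (\<Sum>k<n. monom (coeff u k) k)"
proof (rule poly_eqI)
  fix t
  show "coeff u t = coeff (\<Sum>k<n. monom (coeff u k) k) t"
    unfolding coeff_sum coeff_monom using assms[of t] by (cases "t < n") auto
qed

lemma rev_sum_u:
  fixes u :: "int poly"
  assumes "\<And>i. i \<ge> n \<Longrightarrow> coeff u i = 0"
  shows "(\<Sum>i<n. monom (coeff u (n - 1 - i)) (n - i)) = [:0,1:] * u"
proof -
  have "(\<Sum>i<n. monom (coeff u (n - 1 - i)) (n - i)) = (\<Sum>k<n. monom (coeff u k) (Suc k))"
    by (rule sum.reindex_bij_witness[where i="\<lambda>k. n - 1 - k" and j="\<lambda>i. n - 1 - i"])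
       (auto simp: Suc_diff_Suc)
  also have "\<dots> = [:0,1:] * (\<Sum>k<n. monom (coeff u k) k)"
    by (simp add: sum_distrib_left monom_Suc_x)
  also have "\<dots> = [:0,1:] * u" using poly_lt_sum[OF assms] by simp
  finally show ?thesis .
qed

lemma rev_sum_v:
  fixes v :: "int poly"
  assumes "\<And>i. i \<ge> m \<Longrightarrow> coeff v i = 0"
  shows "(\<Sum>i\<in>{n..<m+n}. monom (coeff v (m + n - 1 - i)) (m + n - i)) = [:0,1:] * v"
proof -
  have "(\<Sum>i\<in>{n..<m+n}. monom (coeff v (m + n - 1 - i)) (m + n - i)) = (\<Sum>k<m. monom (coeff v k) (Suc k))"
    by (rule sum.reindex_bij_witness[where i="\<lambda>k. m + n - 1 - k" and j="\<lambda>i. m + n - 1 - i"])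
       (auto simp: Suc_diff_Suc)
  also have "\<dots> = [:0,1:] * (\<Sum>k<m. monom (coeff v k) k)"
    by (simp add: sum_distrib_left monom_Suc_x)
  also have "\<dots> = [:0,1:] * v" using poly_lt_sum[OF assms] by simp
  finally show ?thesis .
qed

lemma bounded_bezout:
  fixes f g a b :: "int poly"
  assumes mf: "lead_coeff f = 1" and bez: "a * f + b * g = 1"
    and k: "k < degree f + degree g"
  shows "\<exists>u v. u * f + v * g = monom 1 k \<and> (\<forall>i\<ge>degree g. coeff u i = 0) \<and> (\<forall>i\<ge>degree f. coeff v i = 0)"
proof -
  define u0 where "u0 = monom 1 k * a"
  define v0 where "v0 = monom 1 k * b"
  have e0: "u0 * f + v0 * g = monom 1 k"
    unfolding u0_def v0_def using arg_cong[OF bez, of "\<lambda>x. monom 1 k * x"] by (simp add: algebra_simps)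
  have f0: "f \<noteq> 0" using mf by auto
  obtain s r where sr: "pseudo_divmod v0 f = (s, r)" by (cases "pseudo_divmod v0 f") auto
  have vsr: "v0 = f * s + r" using pseudo_divmod(1)[OF f0 sr] mf by simp
  have rdeg: "r = 0 \<or> degree r < degree f" using pseudo_divmod(2)[OF f0 sr] .
  define u where "u = u0 + s * g"
  have e: "u * f + r * g = monom 1 k" unfolding u_def using e0 vsr by (simp add: algebra_simps)
  have cr: "\<forall>i\<ge>degree f. coeff r i = 0" using rdeg by (auto intro: coeff_eq_0)
  have cu: "\<forall>i\<ge>degree g. coeff u i = 0"
  proof (cases "u = 0")
    case True then show ?thesis by simp
  next
    case False
    have "degree (u * f) = degree u + degree f" using False f0 by (rule degree_mult_eq)
    moreover have "u * f = monom 1 k - r * g" using e by (simp add: algebra_simps)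
    moreover have "degree (monom (1::int) k - r * g) < degree f + degree g"
    proof -
      have "degree (monom (1::int) k - r * g) \<le> max (degree (monom (1::int) k)) (degree (r * g))"
        by (rule degree_diff_le_max)
      moreover have "degree (monom (1::int) k) < degree f + degree g" using k by (simp add: degree_monom_eq)
      moreover have "degree (r * g) < degree f + degree g"
      proof (cases "r = 0")
        case True then show ?thesis using k by simp presburger
      next
        case False
        have "degree (r * g) \<le> degree r + degree g" by (rule degree_mult_le)
        then show ?thesis using rdeg False by simp
      qed
      ultimately show ?thesis by simp
    qed
    ultimately have "degree u < degree g" by simp
    then show ?thesis by (auto intro: coeff_eq_0)
  qed
  show ?thesis using e cu cr by blast
qed

lemma resultant_unit:
  fixes f g a b :: "int poly"
  assumes mf: "lead_coeff f = 1" and bez: "a * f + b * g = 1"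
  shows "resultant f g dvd 1"
proof -
  define m where "m = degree f"
  define n where "n = degree g"
  define D where "D = m + n"
  define S where "S = sylvester_mat f g"
  have SC: "S \<in> carrier_mat D D" unfolding S_def D_def m_def n_def by (rule sylvester_carrier_mat)
  have ex: "\<exists>r. \<forall>j<D. (\<Sum>i<D. r i * S $$ (i,j)) = (if j = j' then 1 else 0)" if j': "j' < D" for j'
  proof -
    define k where "k = D - 1 - j'"
    have kD: "k < D" using j' unfolding k_def by simp
    obtain u v where uv: "u * f + v * g = monom 1 k" and cu: "\<forall>i\<ge>n. coeff u i = 0"
      and cv: "\<forall>i\<ge>m. coeff v i = 0"
      using bounded_bezout[OF mf bez, of k] kD unfolding D_def m_def n_def by blast
    define r where "r i = (if i < n then coeff u (n - 1 - i) else coeff v (D - 1 - i))" for i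
    define H where "H = (\<Sum>i<D. smult (r i) (rowp f g i))"
    have split: "{..<D} = {..<n} \<union> {n..<D}" unfolding D_def by auto
    have H1: "(\<Sum>i<n. smult (r i) (rowp f g i)) = (\<Sum>i<n. monom (coeff u (n - 1 - i)) (n - i)) * f"
      unfolding sum_distrib_right
      by (rule sum.cong) (auto simp: r_def rowp_def n_def smult_monom mult_smult_left[symmetric])
    have H2: "(\<Sum>i\<in>{n..<D}. smult (r i) (rowp f g i)) = (\<Sum>i\<in>{n..<m+n}. monom (coeff v (m + n - 1 - i)) (m + n - i)) * g"
      unfolding sum_distrib_right
      by (rule sum.cong) (auto simp: r_def rowp_def n_def m_def D_def smult_monom mult_smult_left[symmetric])
    have disj: "{..<n} \<inter> {n..<D} = {}" by auto
    have "H = (\<Sum>i<n. monom (coeff u (n - 1 - i)) (n - i)) * f +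
       (\<Sum>i\<in>{n..<m+n}. monom (coeff v (m + n - 1 - i)) (m + n - i)) * g"
      unfolding H_def split sum.union_disjoint[OF finite_lessThan finite_atLeastLessThan disj] H1 H2 ..
    also have "\<dots> = [:0,1:] * u * f + [:0,1:] * v * g"
      by (simp only: rev_sum_u[of n u, OF cu[rule_format]] rev_sum_v[of m v, OF cv[rule_format]])
    also have "\<dots> = [:0,1:] * monom 1 k" using uv by (simp add: algebra_simps)
    finally have H: "H = monom 1 (Suc k)" by (simp add: monom_Suc_x)
    show ?thesis
    proof (intro exI[of _ r] allI impI)
      fix j assume j: "j < D"
      have "(\<Sum>i<D. r i * S $$ (i,j)) = coeff H (D - j)"
        unfolding H_def S_def using row_comb[of j f g r] j unfolding D_def m_def n_def by simp
      also have "\<dots> = (if j = j' then 1 else 0)" unfolding H using j j' kD unfolding k_def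
        by (auto simp: coeff_monom)
      finally show "(\<Sum>i<D. r i * S $$ (i,j)) = (if j = j' then 1 else 0)" .
    qed
  qed
  hence "\<forall>j'. \<exists>r. j' < D \<longrightarrow> (\<forall>j<D. (\<Sum>i<D. r i * S $$ (i,j)) = (if j = j' then 1 else 0))"
    by blast
  then obtain rr where rr: "\<And>j' j. j' < D \<Longrightarrow> j < D \<Longrightarrow> (\<Sum>i<D. rr j' i * S $$ (i,j)) = (if j = j' then 1 else 0)"
    by metis
  define R where "R = mat D D (\<lambda>(j',i). rr j' i)"
  have RC: "R \<in> carrier_mat D D" unfolding R_def by simp
  have RS: "R * S = 1\<^sub>m D"
  proof (rule eq_matI)
    fix j' j assume "j' < dim_row (1\<^sub>m D)" "j < dim_col (1\<^sub>m D)"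
    hence jj: "j' < D" "j < D" by auto
    have "(R * S) $$ (j', j) = (\<Sum>i<D. rr j' i * S $$ (i,j))"
      using jj SC unfolding R_def by (simp add: scalar_prod_def lessThan_atLeast0)
    also have "\<dots> = 1\<^sub>m D $$ (j', j)" using rr[OF jj] jj by auto
    finally show "(R * S) $$ (j', j) = 1\<^sub>m D $$ (j', j)" .
  qed (use RC SC in auto)
  have "det R * det S = 1" using det_mult[OF RC SC] RS by simp
  thus ?thesis unfolding resultant_def S_def by (metis dvdI mult.commute)
qed

lemma ev_monom[simp]: "ev (monom c i) z = of_int c * z ^ i"
  by (simp add: ev_def poly_monom map_poly_monom)

lemma ev_const_poly: "degree p = 0 \<Longrightarrow> ev p z = of_int (coeff p 0)"
  by (metis degree_0_id ev_const)

lemma min_poly_props: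
  assumes "is_min_int_poly g z"
  shows "ev g z = 0" "g \<noteq> 0" "degree g \<noteq> 0" "irreducible g"
proof -
  show ev: "ev g z = 0" using assms unfolding is_min_int_poly_def ev_def by auto
  show irr: "irreducible g" using assms unfolding is_min_int_poly_def by auto
  show g0: "g \<noteq> 0" using irr by auto
  show "degree g \<noteq> 0"
  proof
    assume "degree g = 0"
    hence "of_int (coeff g 0) = (0::complex)" using ev ev_const_poly[of g z] by simp
    hence "coeff g 0 = 0" by simp
    with \<open>degree g = 0\<close> have "g = 0" by (metis degree_0_id pCons_0_0)
    with g0 show False by simp
  qed
qed

lemma min_dvd:
  assumes mg: "is_min_int_poly g z" and pz: "ev p z = 0"
  shows "g dvd p"
proof (cases "p = 0")
  case True then show ?thesis by simp
next
  case False
  note gp = min_poly_props[OF mg]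
  have dp: "degree p \<noteq> 0"
  proof
    assume "degree p = 0"
    hence "of_int (coeff p 0) = (0::complex)" using pz ev_const_poly[of p z] by simp
    hence "coeff p 0 = 0" by simp
    with \<open>degree p = 0\<close> have "p = 0" by (metis degree_0_id pCons_0_0)
    with False show False by simp
  qed
  obtain u v where uv: "u * g + v * p = [:resultant g p:]"
    using resultant_bezout[of g p] gp(3) by auto
  have "(of_int (resultant g p) :: complex) = ev (u * g + v * p) z" unfolding uv by simp
  also have "\<dots> = 0" using gp(1) pz by simp
  finally have "resultant g p = 0" by simp
  hence dgcd: "degree (gcd g p) \<noteq> 0" using resultant_0_gcd by blast
  obtain h where gh: "g = gcd g p * h" by (meson dvdE gcd_dvd1)
  have "gcd g p dvd 1 \<or> h dvd 1" using irreducibleD[OF gp(4) gh] .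
  moreover have "\<not> gcd g p dvd 1" using dgcd by (auto simp: is_unit_poly_iff)
  ultimately have hu: "h dvd 1" by simp
  have "g dvd gcd g p" by (subst gh) (simp add: mult_unit_dvd_iff hu)
  thus ?thesis using gcd_dvd2 dvd_trans by blast
qed

lemma min_poly_monic:
  assumes mg: "is_min_int_poly g z" and ai: "alg_integer z"
  shows "lead_coeff g = 1"
proof -
  from ai obtain p where p: "lead_coeff p = 1" "ev p z = 0"
    unfolding alg_integer_def ev_def by auto
  have "g dvd p" by (rule min_dvd[OF mg p(2)])
  then obtain h where "p = g * h" by (elim dvdE)
  hence "lead_coeff g * lead_coeff h = 1" using p(1) by (simp add: lead_coeff_mult)
  hence "lead_coeff g dvd 1" by (metis dvdI)
  moreover have "lead_coeff g > 0" using mg unfolding is_min_int_poly_def by auto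
  ultimately show ?thesis by (simp add: zdvd1_eq)
qed

lemma sf_props:
  assumes "subfield_C K"
  shows "0 \<in> K" "1 \<in> K" "x \<in> K \<Longrightarrow> y \<in> K \<Longrightarrow> x + y \<in> K" "x \<in> K \<Longrightarrow> y \<in> K \<Longrightarrow> x * y \<in> K"
    "x \<in> K \<Longrightarrow> - x \<in> K"
  using assms unfolding subfield_C_def by auto

lemma sf_pow: "subfield_C K \<Longrightarrow> x \<in> K \<Longrightarrow> x ^ i \<in> K"
  by (induction i) (auto intro: sf_props)

lemma sf_of_nat: "subfield_C K \<Longrightarrow> of_nat m \<in> K"
  by (induction m) (auto intro: sf_props)

lemma sf_of_int: "subfield_C K \<Longrightarrow> of_int m \<in> K"
proof (cases "m \<ge> 0")
  case True
  assume K: "subfield_C K"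
  have "(of_int m :: complex) = of_nat (nat m)" using True by simp
  then show ?thesis using sf_of_nat[OF K] by simp
next
  case False
  assume K: "subfield_C K"
  have "(of_int m :: complex) = - of_nat (nat (- m))" using False by simp
  then show ?thesis using sf_of_nat[OF K] sf_props(5)[OF K] by simp
qed

interpretation ratvs: vector_space "\<lambda>(r::rat) (z::complex). of_rat r * z"
  by unfold_locales (auto simp: algebra_simps of_rat_add of_rat_mult)

lemma clear_denoms:
  fixes t :: "'a set" and u :: "'a \<Rightarrow> rat"
  assumes "finite t"
  shows "\<exists>L w. L \<noteq> 0 \<and> (\<forall>v\<in>t. of_int (w v) = of_int L * u v)"
proof -
  define L where "L = (\<Prod>v\<in>t. snd (quotient_of (u v)))"
  define w where "w v = fst (quotient_of (u v)) * (\<Prod>v'\<in>t - {v}. snd (quotient_of (u v')))" for v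
  have pos: "snd (quotient_of (u v)) > 0" for v using quotient_of_denom_pos' by blast
  have "L \<noteq> 0" unfolding L_def using pos assms by (simp add: less_imp_neq[symmetric])
  moreover have "of_int (w v) = of_int L * u v" if v: "v \<in> t" for v
  proof -
    obtain a b where ab: "quotient_of (u v) = (a, b)" by (cases "quotient_of (u v)") auto
    have uv: "u v = of_int a / of_int b" using quotient_of_div[OF ab] .
    have b0: "b \<noteq> 0" using pos[of v] ab by auto
    have fa: "fst (quotient_of (u v)) = a" using ab by simp
    have Leq: "L = b * (\<Prod>v'\<in>t - {v}. snd (quotient_of (u v')))"
      unfolding L_def using prod.remove[OF assms v, of "\<lambda>v. snd (quotient_of (u v))"] ab by simp
    have "(of_int (w v) :: rat) = of_int a * of_int (\<Prod>v'\<in>t - {v}. snd (quotient_of (u v')))"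
      unfolding w_def fa by simp
    also have "\<dots> = of_int L * u v" unfolding Leq uv using b0 by (simp add: field_simps)
    finally show ?thesis .
  qed
  ultimately show ?thesis by blast
qed

lemma nf_algebraic:
  assumes nf: "number_field K" and x: "x \<in> K"
  shows "\<exists>p::int poly. p \<noteq> 0 \<and> ev p x = 0"
proof -
  have sf: "subfield_C K" using nf unfolding number_field_def by auto
  from nf obtain B where B: "finite B" "B \<subseteq> K" "\<forall>y\<in>K. \<exists>c. y = (\<Sum>b\<in>B. of_rat (c b) * b)"
    unfolding number_field_def by auto
  have Kspan: "K \<subseteq> ratvs.span B"
  proof
    fix y assume "y \<in> K"
    then obtain c where y: "y = (\<Sum>b\<in>B. of_rat (c b) * b)" using B(3) by auto
    show "y \<in> ratvs.span B" unfolding y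
      by (intro ratvs.span_sum ratvs.span_scale ratvs.span_base)
  qed
  define d where "d = card B"
  show ?thesis
  proof (cases "inj_on (\<lambda>i. x ^ i) {..d}")
    case False
    then obtain i j where ij: "i \<le> d" "j \<le> d" "i \<noteq> j" "x ^ i = x ^ j"
      unfolding inj_on_def by auto
    define p where "p = monom (1::int) (max i j) - monom 1 (min i j)"
    have "coeff p (max i j) = 1" using ij unfolding p_def by (auto simp: coeff_monom)
    hence "p \<noteq> 0" by auto
    moreover have "ev p x = 0" unfolding p_def using ij by (cases "i < j") (auto simp: max_def min_def)
    ultimately show ?thesis by blast
  next
    case True
    define X where "X = (\<lambda>i. x ^ i) ` {..d}"
    have cX: "card X = Suc d" unfolding X_def using card_image[OF True] by simp
    have XK: "X \<subseteq> ratvs.span B" unfolding X_def using Kspan sf_pow[OF sf x] by auto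
    have "ratvs.dependent X"
    proof (rule ccontr)
      assume "\<not> ratvs.dependent X"
      hence "card X \<le> card B" using ratvs.independent_span_bound[OF B(1) _ XK] by blast
      with cX show False unfolding d_def by simp
    qed
    then obtain t u where tu: "finite t" "t \<subseteq> X" "(\<Sum>v\<in>t. of_rat (u v) * v) = 0" "\<exists>v\<in>t. u v \<noteq> 0"
      unfolding ratvs.dependent_explicit by blast
    obtain L w where Lw: "L \<noteq> 0" "\<forall>v\<in>t. of_int (w v) = of_int L * u v"
      using clear_denoms[OF tu(1), of u] by blast
    have wsum: "(\<Sum>v\<in>t. of_int (w v) * v) = (0::complex)"
    proof -
      have "(\<Sum>v\<in>t. of_int (w v) * v) = (\<Sum>v\<in>t. of_int L * (of_rat (u v) * v))"
      proof (rule sum.cong[OF refl])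
        fix v assume "v \<in> t"
        hence "(of_int (w v) :: complex) = of_rat (of_int (w v))" by simp
        also have "\<dots> = of_rat (of_int L * u v)" using Lw(2) \<open>v \<in> t\<close> by simp
        also have "\<dots> = of_int L * of_rat (u v)" by (simp add: of_rat_mult)
        finally show "of_int (w v) * v = of_int L * (of_rat (u v) * v)" by simp
      qed
      also have "\<dots> = of_int L * (\<Sum>v\<in>t. of_rat (u v) * v)" by (simp add: sum_distrib_left)
      finally show ?thesis using tu(3) by simp
    qed
    define I where "I = {i \<in> {..d}. x ^ i \<in> t}"
    have tI: "t = (\<lambda>i. x ^ i) ` I" using tu(2) unfolding I_def X_def by auto
    have injI: "inj_on (\<lambda>i. x ^ i) I" using True unfolding I_def by (rule inj_on_subset) auto
    have finI: "finite I" unfolding I_def by auto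
    define p where "p = (\<Sum>i\<in>I. monom (w (x ^ i)) i)"
    have "ev p x = (\<Sum>i\<in>I. of_int (w (x ^ i)) * x ^ i)" unfolding p_def ev_sum by simp
    also have "\<dots> = (\<Sum>v\<in>t. of_int (w v) * v)" unfolding tI sum.reindex[OF injI] by simp
    finally have evp: "ev p x = 0" using wsum by simp
    obtain v0 where v0: "v0 \<in> t" "u v0 \<noteq> 0" using tu(4) by blast
    then obtain i0 where i0: "i0 \<in> I" "v0 = x ^ i0" unfolding tI by auto
    have "w v0 \<noteq> 0"
    proof
      assume w0: "w v0 = 0"
      have "rat_of_int (w v0) = rat_of_int L * u v0" using Lw(2) v0(1) by blast
      hence "rat_of_int L * u v0 = 0" using w0 by simp
      with Lw(1) v0(2) show False by simp
    qed
    moreover have "coeff p i0 = w (x ^ i0)"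
      unfolding p_def coeff_sum coeff_monom using finI i0(1) by simp
    ultimately have "p \<noteq> 0" using i0 by auto
    with evp show ?thesis by blast
  qed
qed

lemma alg_int_multiple:
  fixes p :: "int poly"
  assumes p0: "p \<noteq> 0" and px: "ev p x = 0"
  shows "\<exists>m::int. m \<noteq> 0 \<and> alg_integer (of_int m * x)"
proof -
  define d where "d = degree p"
  define c where "c = lead_coeff p"
  have c0: "c \<noteq> 0" using p0 unfolding c_def by simp
  have d0: "d \<noteq> 0"
  proof
    assume "d = 0"
    hence "ev p x = of_int (coeff p 0)" using ev_const_poly unfolding d_def by blast
    with px have "coeff p 0 = 0" by simp
    with \<open>d = 0\<close> have "p = 0" unfolding d_def by (metis degree_0_id pCons_0_0)
    with p0 show False by simp
  qed
  define r where "r = monom 1 d + (\<Sum>i<d. monom (coeff p i * c ^ (d - 1 - i)) i)"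
  have cr: "coeff r t = (if t = d then 1 else if t < d then coeff p t * c ^ (d - 1 - t) else 0)" for t
    unfolding r_def coeff_add coeff_sum coeff_monom by auto
  have "degree r = d"
  proof (rule antisym)
    show "degree r \<le> d" by (rule degree_le) (auto simp: cr)
    show "d \<le> degree r" by (rule le_degree) (simp add: cr)
  qed
  hence lr: "lead_coeff r = 1" by (simp add: cr)
  have evp: "ev p x = (\<Sum>i<d. of_int (coeff p i) * x ^ i) + of_int c * x ^ d"
  proof -
    have "ev p x = (\<Sum>i\<le>d. coeff (map_poly of_int p) i * x ^ i)"
      unfolding ev_def poly_altdef d_def by (simp add: degree_map_poly)
    also have "\<dots> = (\<Sum>i\<le>d. of_int (coeff p i) * x ^ i)" by simp
    also have "\<dots> = (\<Sum>i<d. of_int (coeff p i) * x ^ i) + of_int c * x ^ d"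
      unfolding c_def d_def by (simp add: lessThan_Suc_atMost[symmetric])
    finally show ?thesis .
  qed
  have "ev r (of_int c * x) = (of_int c * x) ^ d + (\<Sum>i<d. of_int (coeff p i * c ^ (d - 1 - i)) * (of_int c * x) ^ i)"
    unfolding r_def ev_add ev_sum ev_monom by simp
  also have "\<dots> = of_int c ^ (d - 1) * ev p x"
  proof -
    have "(of_int c * x) ^ d = of_int c ^ (d - 1) * (of_int c * x ^ d)"
      using d0 by (cases d) (auto simp: power_mult_distrib)
    moreover have "(\<Sum>i<d. of_int (coeff p i * c ^ (d - 1 - i)) * (of_int c * x) ^ i)
        = of_int c ^ (d - 1) * (\<Sum>i<d. of_int (coeff p i) * x ^ i)"
      unfolding sum_distrib_left
    proof (rule sum.cong[OF refl])
      fix i assume "i \<in> {..<d}"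
      hence "d - 1 = (d - 1 - i) + i" by auto
      hence "(of_int c :: complex) ^ (d - 1) = of_int c ^ (d - 1 - i) * of_int c ^ i"
        by (metis power_add)
      thus "of_int (coeff p i * c ^ (d - 1 - i)) * (of_int c * x) ^ i =
            of_int c ^ (d - 1) * (of_int (coeff p i) * x ^ i)"
        by (simp add: power_mult_distrib)
    qed
    ultimately show ?thesis unfolding evp by (simp add: algebra_simps)
  qed
  also have "\<dots> = 0" using px by simp
  finally have "ev r (of_int c * x) = 0" .
  hence "alg_integer (of_int c * x)" unfolding alg_integer_def ev_def[symmetric] using lr by blast
  thus ?thesis using c0 by blast
qed

lemma nf_int_multiple:
  assumes nf: "number_field K" and x: "x \<in> K"
  shows "\<exists>m::int. m \<noteq> 0 \<and> of_int m * x \<in> ring_of_integers K"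
proof -
  have sf: "subfield_C K" using nf unfolding number_field_def by auto
  obtain p :: "int poly" where "p \<noteq> 0" "ev p x = 0" using nf_algebraic[OF nf x] by blast
  then obtain m where "m \<noteq> 0" "alg_integer (of_int m * x)" using alg_int_multiple by blast
  moreover have "of_int m * x \<in> K" using sf_props(4)[OF sf sf_of_int[OF sf] x] .
  ultimately show ?thesis unfolding ring_of_integers_def by blast
qed

lemma pia_iff: "x \<in> prod_int_alg2 n a \<longleftrightarrow> rep n a x \<and> (\<forall>k\<ge>n. x k = 0)"
proof
  assume "x \<in> prod_int_alg2 n a"
  then obtain N c where x: "x = (\<lambda>k. if k < n then
      (\<Sum>i<N. \<Sum>j<N. of_int (c i j) * a k ^ i * cnj (a k) ^ j) else 0)"
    unfolding prod_int_alg2_def by blast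
  show "rep n a x \<and> (\<forall>k\<ge>n. x k = 0)" unfolding rep_def x
    by (intro conjI exI[of _ N] exI[of _ c]) auto
next
  assume "rep n a x \<and> (\<forall>k\<ge>n. x k = 0)"
  then obtain N c where h: "\<forall>k<n. x k = (\<Sum>i<N. \<Sum>j<N. of_int (c i j) * a k ^ i * cnj (a k) ^ j)"
    and z: "\<forall>k\<ge>n. x k = 0" unfolding rep_def by blast
  have "x = (\<lambda>k. if k < n then
      (\<Sum>i<N. \<Sum>j<N. of_int (c i j) * a k ^ i * cnj (a k) ^ j) else 0)"
    using h z by (intro ext) auto
  thus "x \<in> prod_int_alg2 n a" unfolding prod_int_alg2_def by blast
qed

lemma ia_iff: "y \<in> int_alg2 a (cnj a) \<longleftrightarrow> rep 1 (\<lambda>_. a) (\<lambda>_. y)"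
  unfolding int_alg2_def rep_def by auto

lemma roi_0: "subfield_C K \<Longrightarrow> 0 \<in> ring_of_integers K"
  unfolding ring_of_integers_def alg_integer_def
  by (auto intro: sf_props intro!: exI[of _ "[:0,1:]"])

lemma roi_1: "subfield_C K \<Longrightarrow> 1 \<in> ring_of_integers K"
  unfolding ring_of_integers_def alg_integer_def
  by (auto intro: sf_props intro!: exI[of _ "[:-1,1:]"])

lemma cm_sf: "CM_field K \<Longrightarrow> subfield_C K"
  unfolding CM_field_def number_field_def by auto

lemma cm_nf: "CM_field K \<Longrightarrow> number_field K"
  unfolding CM_field_def by auto

lemma forward_i:
  assumes inK: "\<forall>k<n. \<alpha> k \<in> K k" and q: "\<forall>k<n. \<alpha> k * cnj (\<alpha> k) = of_int q"
    and EQ: "prod_int_alg2 n \<alpha> = prod_ring_of_integers n K"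
    and sfK: "\<forall>k<n. subfield_C (K k)"
    and i: "i < n"
  shows "weil_generator (K i) (\<alpha> i)"
  unfolding weil_generator_def
proof (intro conjI)
  show "\<alpha> i \<in> K i" using inK i by auto
  show "\<alpha> i * cnj (\<alpha> i) \<in> \<int>" using q i by auto
  show "int_alg2 (\<alpha> i) (cnj (\<alpha> i)) = ring_of_integers (K i)"
  proof
    show "int_alg2 (\<alpha> i) (cnj (\<alpha> i)) \<subseteq> ring_of_integers (K i)"
    proof
      fix y assume "y \<in> int_alg2 (\<alpha> i) (cnj (\<alpha> i))"
      then obtain N c where y: "y = (\<Sum>a<N. \<Sum>b<N. of_int (c a b) * \<alpha> i ^ a * cnj (\<alpha> i) ^ b)"
        unfolding int_alg2_def by blast
      define x where "x = (\<lambda>k. if k < n then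
          (\<Sum>a<N. \<Sum>b<N. of_int (c a b) * \<alpha> k ^ a * cnj (\<alpha> k) ^ b) else 0)"
      have "x \<in> prod_int_alg2 n \<alpha>" unfolding prod_int_alg2_def x_def by blast
      hence "x \<in> prod_ring_of_integers n K" using EQ by simp
      hence "x i \<in> ring_of_integers (K i)" using i unfolding prod_ring_of_integers_def by auto
      thus "y \<in> ring_of_integers (K i)" using i y unfolding x_def by simp
    qed
  next
    show "ring_of_integers (K i) \<subseteq> int_alg2 (\<alpha> i) (cnj (\<alpha> i))"
    proof
      fix y assume y: "y \<in> ring_of_integers (K i)"
      define x where "x = (\<lambda>k. if k = i then y else 0)"
      have "x \<in> prod_ring_of_integers n K"
        unfolding prod_ring_of_integers_def x_def using y i sfK roi_0 by auto
      hence "x \<in> prod_int_alg2 n \<alpha>" using EQ by simp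
      then obtain N c where x: "x = (\<lambda>k. if k < n then
          (\<Sum>a<N. \<Sum>b<N. of_int (c a b) * \<alpha> k ^ a * cnj (\<alpha> k) ^ b) else 0)"
        unfolding prod_int_alg2_def by blast
      have "y = x i" unfolding x_def by simp
      also have "\<dots> = (\<Sum>a<N. \<Sum>b<N. of_int (c a b) * \<alpha> i ^ a * cnj (\<alpha> i) ^ b)"
        unfolding x using i by simp
      finally show "y \<in> int_alg2 (\<alpha> i) (cnj (\<alpha> i))" unfolding int_alg2_def by blast
    qed
  qed
qed

lemma wg_nonreal:
  assumes cm: "CM_field K" and wg: "weil_generator K a"
  shows "a \<noteq> cnj a"
proof
  assume ar: "a = cnj a"
  obtain x where x: "x \<in> K" "x \<notin> \<real>" using cm unfolding CM_field_def by auto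
  obtain m where m: "m \<noteq> 0" "of_int m * x \<in> ring_of_integers K"
    using nf_int_multiple[OF cm_nf[OF cm] x(1)] by blast
  hence "of_int m * x \<in> int_alg2 a (cnj a)" using wg unfolding weil_generator_def by auto
  then obtain N c where y: "of_int m * x = (\<Sum>i<N. \<Sum>j<N. of_int (c i j) * a ^ i * cnj a ^ j)"
    unfolding int_alg2_def by blast
  have "cnj (of_int m * x) = of_int m * x"
    unfolding y by (simp add: cnj_sum ar[symmetric])
  hence "of_int m * x \<in> \<real>" using Reals_cnj_iff by blast
  hence r: "of_int m * x \<in> \<real>" .
  have "x = (of_int m * x) / of_int m" using m(1) by simp
  also have "\<dots> \<in> \<real>" using r by (intro Reals_divide) auto
  finally show False using x(2) by simp
qed

lemma forward_iii:
  assumes cmK: "\<forall>k<n. CM_field (K k)"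
    and q: "\<forall>k<n. \<alpha> k * cnj (\<alpha> k) = of_int q"
    and EQ: "prod_int_alg2 n \<alpha> = prod_ring_of_integers n K"
    and WG: "\<forall>k<n. weil_generator (K k) (\<alpha> k)"
    and mg: "\<forall>k<n. is_min_int_poly (g k) (\<alpha> k + cnj (\<alpha> k))"
    and i: "i < n" and j: "j < n" and ij: "i \<noteq> j"
  shows "\<bar>resultant (g i) (g j)\<bar> = 1"
proof -
  define b where "b k = \<alpha> k + cnj (\<alpha> k)" for k
  have sfK: "\<And>k. k < n \<Longrightarrow> subfield_C (K k)" using cmK cm_sf by blast
  have nr: "\<alpha> k \<noteq> cnj (\<alpha> k)" if k: "k < n" for k
    using wg_nonreal[of "K k" "\<alpha> k"] cmK WG k by simp
  define e where "e = (\<lambda>k. if k = i then 1 else (0::complex))"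
  have "e \<in> prod_ring_of_integers n K"
    unfolding prod_ring_of_integers_def
  proof (intro CollectI conjI allI impI)
    fix k assume k: "k < n"
    show "e k \<in> ring_of_integers (K k)" unfolding e_def using roi_0[OF sfK[OF k]] roi_1[OF sfK[OF k]] by auto
  next
    fix k assume "n \<le> k" thus "e k = 0" unfolding e_def using i by simp
  qed
  hence "e \<in> prod_int_alg2 n \<alpha>" using EQ by simp
  hence "rep n \<alpha> e" using pia_iff by blast
  hence "srep n \<alpha> e" using rep_srep[OF q] by blast
  then obtain P Q where PQ: "\<And>k. k < n \<Longrightarrow> e k = ev P (b k) + ev Q (b k) * \<alpha> k"
    unfolding srep_def b_def by blast
  have eP: "e k = ev P (b k)" if k: "k < n" for k
  proof -
    have cb: "cnj (b k) = b k" unfolding b_def by simp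
    have "cnj (e k) = e k" unfolding e_def by simp
    hence ec: "e k = ev P (b k) + ev Q (b k) * cnj (\<alpha> k)"
      using arg_cong[OF PQ[OF k], of cnj] by (simp add: cnj_ev cb)
    have "ev Q (b k) * (\<alpha> k - cnj (\<alpha> k)) =
       (ev P (b k) + ev Q (b k) * \<alpha> k) - (ev P (b k) + ev Q (b k) * cnj (\<alpha> k))"
      by (simp add: algebra_simps)
    also have "\<dots> = 0" by (simp only: PQ[OF k, symmetric] ec[symmetric] diff_self)
    finally have "ev Q (b k) * (\<alpha> k - cnj (\<alpha> k)) = 0" .
    hence "ev Q (b k) = 0" using nr[OF k] by simp
    thus ?thesis using PQ[OF k] by simp
  qed
  have P1: "ev (P - 1) (b i) = 0" using eP[OF i] unfolding e_def by simp
  have P0: "ev P (b j) = 0" using eP[OF j] ij unfolding e_def by simp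
  have "b i \<in> int_alg2 (\<alpha> i) (cnj (\<alpha> i))"
    unfolding ia_iff b_def by (rule rep_add[OF rep_a rep_cnj])
  hence "b i \<in> ring_of_integers (K i)" using WG i unfolding weil_generator_def by auto
  hence ai: "alg_integer (b i)" unfolding ring_of_integers_def by auto
  have mgi: "is_min_int_poly (g i) (b i)" using mg i unfolding b_def by auto
  have mgj: "is_min_int_poly (g j) (b j)" using mg j unfolding b_def by auto
  have monic: "lead_coeff (g i) = 1" by (rule min_poly_monic[OF mgi ai])
  obtain A where A: "P - 1 = g i * A" using min_dvd[OF mgi P1] by (elim dvdE)
  obtain B where B: "P = g j * B" using min_dvd[OF mgj P0] by (elim dvdE)
  have "(- A) * g i + B * g j = 1" using A B by (simp add: algebra_simps)
  hence "resultant (g i) (g j) dvd 1" by (rule resultant_unit[OF monic])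
  thus ?thesis by (simp add: zdvd1_eq)
qed

lemma backward:
  assumes WG: "\<forall>k<n. weil_generator (K k) (\<alpha> k)"
    and q: "\<forall>k<n. \<alpha> k * cnj (\<alpha> k) = of_int q"
    and mg: "\<forall>k<n. is_min_int_poly (g k) (\<alpha> k + cnj (\<alpha> k))"
    and res: "\<forall>i<n. \<forall>j<n. i \<noteq> j \<longrightarrow> \<bar>resultant (g i) (g j)\<bar> = 1"
  shows "prod_int_alg2 n \<alpha> = prod_ring_of_integers n K"
proof
  show "prod_int_alg2 n \<alpha> \<subseteq> prod_ring_of_integers n K"
  proof
    fix x assume "x \<in> prod_int_alg2 n \<alpha>"
    then obtain N c where x: "x = (\<lambda>k. if k < n then
          (\<Sum>a<N. \<Sum>b<N. of_int (c a b) * \<alpha> k ^ a * cnj (\<alpha> k) ^ b) else 0)"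
      unfolding prod_int_alg2_def by blast
    have "x k \<in> ring_of_integers (K k)" if k: "k < n" for k
    proof -
      have "x k \<in> int_alg2 (\<alpha> k) (cnj (\<alpha> k))" unfolding x int_alg2_def using k by auto
      thus ?thesis using WG k unfolding weil_generator_def by auto
    qed
    moreover have "x k = 0" if "k \<ge> n" for k using that unfolding x by auto
    ultimately show "x \<in> prod_ring_of_integers n K" unfolding prod_ring_of_integers_def by auto
  qed
next
  show "prod_ring_of_integers n K \<subseteq> prod_int_alg2 n \<alpha>"
  proof
    fix x assume x: "x \<in> prod_ring_of_integers n K"
    define b where "b k = \<alpha> k + cnj (\<alpha> k)" for k
    have "\<exists>P Q. x k = ev P (b k) + ev Q (b k) * \<alpha> k" if k: "k < n" for k
    proof -
      have "x k \<in> ring_of_integers (K k)" using x k unfolding prod_ring_of_integers_def by auto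
      hence "x k \<in> int_alg2 (\<alpha> k) (cnj (\<alpha> k))" using WG k unfolding weil_generator_def by auto
      hence r1: "rep 1 (\<lambda>_. \<alpha> k) (\<lambda>_. x k)" using ia_iff by blast
      have q1: "\<forall>k'<1. (\<lambda>_. \<alpha> k) k' * cnj ((\<lambda>_. \<alpha> k) k') = of_int q" using q k by auto
      have "srep 1 (\<lambda>_. \<alpha> k) (\<lambda>_. x k)" by (rule rep_srep[OF q1 r1])
      thus ?thesis unfolding srep_def b_def by auto
    qed
    note exPQ = this
    have "\<forall>k. \<exists>pq. k < n \<longrightarrow> x k = ev (fst pq) (b k) + ev (snd pq) (b k) * \<alpha> k"
    proof
      fix k show "\<exists>pq. k < n \<longrightarrow> x k = ev (fst pq) (b k) + ev (snd pq) (b k) * \<alpha> k"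
      proof (cases "k < n")
        case True
        then obtain P Q where "x k = ev P (b k) + ev Q (b k) * \<alpha> k" using exPQ by blast
        thus ?thesis by (intro exI[of _ "(P, Q)"]) simp
      qed simp
    qed
    from choice[OF this] obtain pq where pq: "\<forall>k. k < n \<longrightarrow> x k = ev (fst (pq k)) (b k) + ev (snd (pq k)) (b k) * \<alpha> k"
      by blast
    define PP where "PP k = fst (pq k)" for k
    define QQ where "QQ k = snd (pq k)" for k
    have PQ: "\<And>k. k < n \<Longrightarrow> x k = ev (PP k) (b k) + ev (QQ k) (b k) * \<alpha> k"
      using pq unfolding PP_def QQ_def by blast
    have Fex: "\<exists>F. ev F (b k) = 1 \<and> ev F (b l) = 0" if kl: "k < n" "l < n" "k \<noteq> l" for k l
    proof -
      have mk: "is_min_int_poly (g k) (b k)" using mg kl unfolding b_def by auto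
      have ml: "is_min_int_poly (g l) (b l)" using mg kl unfolding b_def by auto
      obtain u v where uv: "u * g k + v * g l = [:resultant (g k) (g l):]"
        using resultant_bezout[of "g k" "g l"] min_poly_props(3)[OF mk] by auto
      define R where "R = resultant (g k) (g l)"
      have aR: "\<bar>R\<bar> = 1" using res kl unfolding R_def by blast
      have RR: "R * R = 1" using abs_mult_self_eq[of R] aR by simp
      have "ev (u * g k + v * g l) (b k) = of_int R" unfolding uv R_def by simp
      hence evk: "ev v (b k) * ev (g l) (b k) = of_int R" using min_poly_props(1)[OF mk] by simp
      show ?thesis
      proof (intro exI[of _ "smult R (v * g l)"] conjI)
        have "ev (smult R (v * g l)) (b k) = of_int R * of_int R" using evk by (simp add: mult.assoc)
        also have "\<dots> = 1" by (simp only: of_int_mult[symmetric] RR of_int_1)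
        finally show "ev (smult R (v * g l)) (b k) = 1" .
        show "ev (smult R (v * g l)) (b l) = 0" using min_poly_props(1)[OF ml] by simp
      qed
    qed
    note exF = this
    have "\<forall>kl. \<exists>F. fst kl < n \<and> snd kl < n \<and> fst kl \<noteq> snd kl \<longrightarrow> ev F (b (fst kl)) = 1 \<and> ev F (b (snd kl)) = 0"
    proof
      fix kl :: "nat \<times> nat"
      show "\<exists>F. fst kl < n \<and> snd kl < n \<and> fst kl \<noteq> snd kl \<longrightarrow> ev F (b (fst kl)) = 1 \<and> ev F (b (snd kl)) = 0"
      proof (cases "fst kl < n \<and> snd kl < n \<and> fst kl \<noteq> snd kl")
        case True
        then obtain F where "ev F (b (fst kl)) = 1 \<and> ev F (b (snd kl)) = 0" using exF by blast
        thus ?thesis by blast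
      qed blast
    qed
    from choice[OF this] obtain ff where ff: "\<forall>kl. fst kl < n \<and> snd kl < n \<and> fst kl \<noteq> snd kl \<longrightarrow> ev (ff kl) (b (fst kl)) = 1 \<and> ev (ff kl) (b (snd kl)) = 0"
      by blast
    define FF where "FF k l = ff (k, l)" for k l
    have FF: "ev (FF k l) (b k) = 1 \<and> ev (FF k l) (b l) = 0"
      if "k < n" "l < n" "k \<noteq> l" for k l
      using ff[rule_format, of "(k, l)"] that unfolding FF_def by simp
    define E where "E k = (\<Prod>l\<in>{..<n} - {k}. FF k l)" for k
    have evE: "ev (E k) (b l) = (if k = l then 1 else 0)" if kl: "k < n" "l < n" for k l
    proof (cases "k = l")
      case True
      then show ?thesis unfolding E_def ev_prod using FF kl by (auto intro: prod.neutral)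
    next
      case False
      have "(\<Prod>l'\<in>{..<n} - {k}. ev (FF k l') (b l)) = 0"
        using FF[of k l] kl False by (intro prod_zero) auto
      then show ?thesis unfolding E_def ev_prod using False by simp
    qed
    define P where "P = (\<Sum>k<n. E k * PP k)"
    define Q where "Q = (\<Sum>k<n. E k * QQ k)"
    have evP: "ev P (b l) = ev (PP l) (b l)" and evQ: "ev Q (b l) = ev (QQ l) (b l)" if l: "l < n" for l
    proof -
      have "ev P (b l) = (\<Sum>k<n. (if k = l then ev (PP k) (b l) else 0))"
        unfolding P_def ev_sum ev_mult using evE l by (intro sum.cong) auto
      also have "\<dots> = ev (PP l) (b l)" using l by (simp add: sum.delta)
      finally show "ev P (b l) = ev (PP l) (b l)" .
      have "ev Q (b l) = (\<Sum>k<n. (if k = l then ev (QQ k) (b l) else 0))"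
        unfolding Q_def ev_sum ev_mult using evE l by (intro sum.cong) auto
      also have "\<dots> = ev (QQ l) (b l)" using l by (simp add: sum.delta)
      finally show "ev Q (b l) = ev (QQ l) (b l)" .
    qed
    have "srep n \<alpha> x" unfolding srep_def
      by (intro exI[of _ P] exI[of _ Q] allI impI) (simp add: PQ evP evQ b_def[symmetric])
    hence "rep n \<alpha> x" by (rule srep_rep)
    moreover have "\<forall>k\<ge>n. x k = 0" using x unfolding prod_ring_of_integers_def by auto
    ultimately show "x \<in> prod_int_alg2 n \<alpha>" using pia_iff by blast
  qed
qed

theorem mainTheorem4:
  fixes n :: nat and K :: "nat \<Rightarrow> complex set" and \<alpha> :: "nat \<Rightarrow> complex"
    and g :: "nat \<Rightarrow> int poly"
  assumes "\<forall>i<n. CM_field (K i)"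
    and "\<forall>i<n. \<alpha> i \<in> K i"
    and "\<forall>i<n. is_min_int_poly (g i) (\<alpha> i + cnj (\<alpha> i))"
  shows "weil_generator_prod n K \<alpha> \<longleftrightarrow>
           (\<forall>i<n. weil_generator (K i) (\<alpha> i)) \<and>
           (\<forall>i<n. \<forall>j<n. \<alpha> i * cnj (\<alpha> i) = \<alpha> j * cnj (\<alpha> j)) \<and>
           (\<forall>i<n. \<forall>j<n. i \<noteq> j \<longrightarrow> \<bar>resultant (g i) (g j)\<bar> = 1)"
proof
  assume W: "weil_generator_prod n K \<alpha>"
  hence W': "(\<forall>k<n. \<alpha> k \<in> K k) \<and> (\<exists>q::int. \<forall>k<n. \<alpha> k * cnj (\<alpha> k) = of_int q) \<and>
     prod_int_alg2 n \<alpha> = prod_ring_of_integers n K"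
    unfolding weil_generator_prod_def .
  obtain q where q: "\<forall>k<n. \<alpha> k * cnj (\<alpha> k) = of_int q"
    using conjunct1[OF conjunct2[OF W']] by blast
  have EQ: "prod_int_alg2 n \<alpha> = prod_ring_of_integers n K"
    using conjunct2[OF conjunct2[OF W']] .
  have sfK: "\<forall>k<n. subfield_C (K k)" using assms(1) cm_sf by blast
  have WG: "\<forall>k<n. weil_generator (K k) (\<alpha> k)"
    using forward_i[OF assms(2) q EQ sfK] by simp
  show "(\<forall>i<n. weil_generator (K i) (\<alpha> i)) \<and>
           (\<forall>i<n. \<forall>j<n. \<alpha> i * cnj (\<alpha> i) = \<alpha> j * cnj (\<alpha> j)) \<and>
           (\<forall>i<n. \<forall>j<n. i \<noteq> j \<longrightarrow> \<bar>resultant (g i) (g j)\<bar> = 1)"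
  proof (intro conjI allI impI)
    fix i assume "i < n" thus "weil_generator (K i) (\<alpha> i)" using WG by blast
  next
    fix i j assume "i < n" "j < n"
    thus "\<alpha> i * cnj (\<alpha> i) = \<alpha> j * cnj (\<alpha> j)" using q by simp
  next
    fix i j assume "i < n" "j < n" "i \<noteq> j"
    thus "\<bar>resultant (g i) (g j)\<bar> = 1" by (rule forward_iii[OF assms(1) q EQ WG assms(3)])
  qed
next
  assume R: "(\<forall>i<n. weil_generator (K i) (\<alpha> i)) \<and>
           (\<forall>i<n. \<forall>j<n. \<alpha> i * cnj (\<alpha> i) = \<alpha> j * cnj (\<alpha> j)) \<and>
           (\<forall>i<n. \<forall>j<n. i \<noteq> j \<longrightarrow> \<bar>resultant (g i) (g j)\<bar> = 1)"
  have WG: "\<forall>k<n. weil_generator (K k) (\<alpha> k)" using conjunct1[OF R] .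
  have eqn: "\<forall>i<n. \<forall>j<n. \<alpha> i * cnj (\<alpha> i) = \<alpha> j * cnj (\<alpha> j)" using conjunct1[OF conjunct2[OF R]] .
  have res: "\<forall>i<n. \<forall>j<n. i \<noteq> j \<longrightarrow> \<bar>resultant (g i) (g j)\<bar> = 1" using conjunct2[OF conjunct2[OF R]] .
  have "\<exists>q::int. \<forall>k<n. \<alpha> k * cnj (\<alpha> k) = of_int q"
  proof (cases "n = 0")
    case True then show ?thesis by auto
  next
    case False
    hence "\<alpha> 0 * cnj (\<alpha> 0) \<in> \<int>" using WG unfolding weil_generator_def by auto
    then obtain q where "\<alpha> 0 * cnj (\<alpha> 0) = of_int q" by (elim Ints_cases)
    hence q0: "\<alpha> 0 * cnj (\<alpha> 0) = of_int q" .
    show ?thesis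
    proof (intro exI[of _ q] allI impI)
      fix k assume k: "k < n"
      have "\<alpha> k * cnj (\<alpha> k) = \<alpha> 0 * cnj (\<alpha> 0)" using eqn k False by blast
      thus "\<alpha> k * cnj (\<alpha> k) = of_int q" using q0 by simp
    qed
  qed
  then obtain q where q: "\<forall>k<n. \<alpha> k * cnj (\<alpha> k) = of_int q" by blast
  show "weil_generator_prod n K \<alpha>"
    unfolding weil_generator_prod_def
  proof (intro conjI)
    show "\<forall>k<n. \<alpha> k \<in> K k" by (rule assms(2))
    show "\<exists>q::int. \<forall>k<n. \<alpha> k * cnj (\<alpha> k) = of_int q" using q by blast
    show "prod_int_alg2 n \<alpha> = prod_ring_of_integers n K" by (rule backward[OF WG q assms(3) res])
  qed
qed

end
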